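(* Consider a radiation source on the linear trajectory $x(t)=x_o^*+s^*(t-t_o)\sin\theta^*$, $y(t)=y_o^*+s^*(t-t_o)\cos\theta^*$ with $s^*>0$ and known $t_o$, and $n$ sensors at locations $(x_j,y_j)$, $j=1,\dots,n$, which are i.i.d. with zero-mean coordinates (with finite second moments and non-singular covariance). Let $t_j^*=t_o+\frac{\sin\theta^*}{s^*}(x_j-x_o^* )+\frac{\cos\theta^*}{s^*}(y_j-y_o^* )$ be the true time of shortest approach to sensor $j$, and let the recorded times $t_j$ be, conditionally on the sensor locations, independent with $t_j-t_o\sim\mathrm{Erlang}\!\left(2\lambda_T,\frac{2\lambda_T}{t_j^*-t_o}\right)$ (shape $2\lambda_T$, rate $2\lambda_T/(t_j^*-t_o)$, so that $\mathbb{E}[t_j-t_o]=t_j^*-t_o$), where $\lambda_T$ is a positive integer and $t_j^*>t_o$. Let $\mathbb{A}_1\in\mathbb{R}^{n\times 3}$ have $j$-th row $(x_j,\,y_j,\,1)$, let $\mathbb{Y}_1\in\mathbb{R}^n$ have $j$-th entry $t_j-t_o$, let $\mathbb{X}_1=(\mathbb{A}_1^T\mathbb{A}_1)^{-1}\mathbb{A}_1^T\mathbb{Y}_1$, and let $$\mathbb{X}_1^*=\left(\frac{\sin\theta^*}{s^*},\ \frac{\cos\theta^*}{s^*},\ -\frac{1}{s^*}\big(x_o^*\sin\theta^*+y_o^*\cos\theta^*\big)\right)^T.$$ Then $\mathbb{X}_1^*-\mathbb{X}_1\to(0,0,0)^T$ (in probability) as $n\to\infty$.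
   Context: $\mathrm{Erlang}(k,r)$ denotes the Gamma distribution with integer shape $k$ and rate $r$. The recorded time $t_j$ models the midpoint of the (noisy) entry and exit times of the source into and out of the sensing range of sensor $j$; in the noise-free case $t_j=t_j^*$ and $\mathbb{A}_1\mathbb{X}_1^*$ equals the vector with entries $t_j^*-t_o$. *)

theory Defs
  imports "HOL-Probability.Probability"
begin

definition A1_row :: "(nat \<Rightarrow> real) \<Rightarrow> (nat \<Rightarrow> real) \<Rightarrow> nat \<Rightarrow> real^3" where
  "A1_row xs ys j = vector [xs j, ys j, 1]"

definition A1TA1 :: "(nat \<Rightarrow> real) \<Rightarrow> (nat \<Rightarrow> real) \<Rightarrow> nat \<Rightarrow> real^3^3" where
  "A1TA1 xs ys n = (\<chi> i k. \<Sum>j<n. A1_row xs ys j $ i * A1_row xs ys j $ k)"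

definition A1TY1 :: "(nat \<Rightarrow> real) \<Rightarrow> (nat \<Rightarrow> real) \<Rightarrow> (nat \<Rightarrow> real) \<Rightarrow> nat \<Rightarrow> real^3" where
  "A1TY1 xs ys Ys n = (\<chi> i. \<Sum>j<n. A1_row xs ys j $ i * Ys j)"

definition LS_X1 :: "(nat \<Rightarrow> real) \<Rightarrow> (nat \<Rightarrow> real) \<Rightarrow> (nat \<Rightarrow> real) \<Rightarrow> nat \<Rightarrow> real^3" where
  "LS_X1 xs ys Ys n = matrix_inv (A1TA1 xs ys n) *v A1TY1 xs ys Ys n"

definition t_star :: "real \<Rightarrow> real \<Rightarrow> real \<Rightarrow> real \<Rightarrow> real \<Rightarrow> real \<Rightarrow> real \<Rightarrow> real" where
  "t_star t_o s \<theta> xo yo x y = t_o + sin \<theta> / s * (x - xo) + cos \<theta> / s * (y - yo)"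

definition X1_star :: "real \<Rightarrow> real \<Rightarrow> real \<Rightarrow> real \<Rightarrow> real^3" where
  "X1_star s \<theta> xo yo = vector [sin \<theta> / s, cos \<theta> / s, - (1 / s) * (xo * sin \<theta> + yo * cos \<theta>)]"

definition covar :: "'a measure \<Rightarrow> ('a \<Rightarrow> real) \<Rightarrow> ('a \<Rightarrow> real) \<Rightarrow> real" where
  "covar M U V = (\<integral>\<omega>. (U \<omega> - (\<integral>\<omega>'. U \<omega>' \<partial>M)) * (V \<omega> - (\<integral>\<omega>'. V \<omega>' \<partial>M)) \<partial>M)"

definition tendsto_in_prob :: "'a measure \<Rightarrow> (nat \<Rightarrow> 'a \<Rightarrow> 'b::real_normed_vector) \<Rightarrow> 'b \<Rightarrow> bool" where
  "tendsto_in_prob M Z c \<longleftrightarrow>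
     (\<forall>\<epsilon>>0. (\<lambda>n. measure M {\<omega> \<in> space M. norm (Z n \<omega> - c) > \<epsilon>}) \<longlonglongrightarrow> 0)"

end

theory Submission
  imports Defs
begin


definition trunc :: "real \<Rightarrow> real \<Rightarrow> real" where
  "trunc K z = (if \<bar>z\<bar> \<le> K then z else 0)"

lemma trunc_meas[measurable]: "trunc K \<in> borel_measurable borel"
  unfolding trunc_def by measurable

lemma measure_le_sets:
  assumes "finite_measure M" "B \<in> sets M" "A \<subseteq> B"
  shows "measure M A \<le> measure M B"
  using assms by (cases "A \<in> sets M") (auto simp: finite_measure.finite_measure_mono measure_notin_sets)

lemma (in prob_space) tail_small:
  fixes Z :: "'a \<Rightarrow> real"
  assumes int: "integrable M Z"
  shows "(\<lambda>m::nat. expectation (\<lambda>\<omega>. \<bar>Z \<omega> - trunc (real m) (Z \<omega>)\<bar>)) \<longlonglongrightarrow> 0"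
proof -
  have [measurable]: "Z \<in> borel_measurable M" using int by auto
  have "(\<lambda>m::nat. expectation (\<lambda>\<omega>. \<bar>Z \<omega> - trunc (real m) (Z \<omega>)\<bar>)) \<longlonglongrightarrow> expectation (\<lambda>\<omega>. 0::real)"
  proof (rule integral_dominated_convergence[where w="\<lambda>\<omega>. \<bar>Z \<omega>\<bar>"])
    show "integrable M (\<lambda>\<omega>. \<bar>Z \<omega>\<bar>)" using int by auto
    show "AE \<omega> in M. (\<lambda>m::nat. \<bar>Z \<omega> - trunc (real m) (Z \<omega>)\<bar>) \<longlonglongrightarrow> 0"
    proof (rule AE_I2)
      fix \<omega>
      obtain N :: nat where N: "\<bar>Z \<omega>\<bar> \<le> real N" using real_arch_simple by blast
      show "(\<lambda>m::nat. \<bar>Z \<omega> - trunc (real m) (Z \<omega>)\<bar>) \<longlonglongrightarrow> 0"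
      proof (rule tendsto_eventually)
        show "\<forall>\<^sub>F m in sequentially. \<bar>Z \<omega> - trunc (real m) (Z \<omega>)\<bar> = 0"
          using eventually_ge_at_top[of N]
          by eventually_elim (use N in \<open>auto simp: trunc_def\<close>)
      qed
    qed
    show "\<And>m. AE \<omega> in M. norm \<bar>Z \<omega> - trunc (real m) (Z \<omega>)\<bar> \<le> \<bar>Z \<omega>\<bar>"
      by (auto simp: trunc_def)
  qed auto
  then show ?thesis by simp
qed




lemma (in prob_space) sum_sq_bound:
  fixes X :: "nat \<Rightarrow> 'a \<Rightarrow> real"
  assumes ind: "indep_vars (\<lambda>_. borel) X UNIV"
   and bnd: "\<And>j \<omega>. \<omega> \<in> space M \<Longrightarrow> \<bar>X j \<omega>\<bar> \<le> B"
   and mean0: "\<And>j. expectation (X j) = 0"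
  shows "expectation (\<lambda>\<omega>. (\<Sum>j<n. X j \<omega>)^2) \<le> real n * B^2"
proof -
  have rv[measurable]: "\<And>j. X j \<in> borel_measurable M"
    using ind unfolding indep_vars_def by auto
  have B0: "0 \<le> B" using bnd[of _ 0] not_empty[unfolded ex_in_conv[symmetric]] by force
  have intp: "integrable M (\<lambda>\<omega>. X i \<omega> * X j \<omega>)" for i j
  proof (rule Bochner_Integration.integrable_bound[where f="\<lambda>_. B * B"])
    show "AE \<omega> in M. norm (X i \<omega> * X j \<omega>) \<le> norm (B * B)"
      using bnd B0 by (auto simp: abs_mult intro!: mult_mono)
  qed auto
  have intX: "integrable M (X j)" for j
    by (rule Bochner_Integration.integrable_bound[where f="\<lambda>_. B"]) (use bnd B0 in auto)
  have off: "expectation (\<lambda>\<omega>. X i \<omega> * X j \<omega>) = 0" if "i \<noteq> j" for i j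
  proof -
    have "indep_vars (\<lambda>_. borel) X {i, j}" using ind by (rule indep_vars_subset) auto
    then have "(\<integral>\<omega>. (\<Prod>k\<in>{i,j}. X k \<omega>) \<partial>M) = (\<Prod>k\<in>{i,j}. \<integral>\<omega>. X k \<omega> \<partial>M)"
      by (intro indep_vars_lebesgue_integral) (auto intro: intX)
    then show ?thesis using that mean0 by simp
  qed
  have diag: "expectation (\<lambda>\<omega>. X i \<omega> * X i \<omega>) \<le> B^2" for i
  proof -
    have "expectation (\<lambda>\<omega>. X i \<omega> * X i \<omega>) \<le> expectation (\<lambda>\<omega>. B * B)"
    proof (rule integral_mono)
      fix \<omega> assume "\<omega> \<in> space M"
      then have "\<bar>X i \<omega>\<bar> * \<bar>X i \<omega>\<bar> \<le> B * B" using bnd B0 by (intro mult_mono) auto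
      then show "X i \<omega> * X i \<omega> \<le> B * B" by (metis abs_mult_self_eq)
    qed (use intp in auto)
    then show ?thesis by (simp add: power2_eq_square prob_space)
  qed
  have "expectation (\<lambda>\<omega>. (\<Sum>j<n. X j \<omega>)^2) = expectation (\<lambda>\<omega>. \<Sum>i<n. \<Sum>j<n. X i \<omega> * X j \<omega>)"
    by (simp add: power2_eq_square sum_product)
  also have "\<dots> = (\<Sum>i<n. \<Sum>j<n. expectation (\<lambda>\<omega>. X i \<omega> * X j \<omega>))"
    by (simp add: Bochner_Integration.integral_sum intp)
  also have "\<dots> = (\<Sum>i<n. expectation (\<lambda>\<omega>. X i \<omega> * X i \<omega>))"
  proof (rule sum.cong[OF refl])
    fix i assume i: "i \<in> {..<n}"
    have "(\<Sum>j<n. expectation (\<lambda>\<omega>. X i \<omega> * X j \<omega>)) = (\<Sum>j\<in>{i}. expectation (\<lambda>\<omega>. X i \<omega> * X j \<omega>))"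
      by (rule sum.mono_neutral_right) (use i off in auto)
    then show "(\<Sum>j<n. expectation (\<lambda>\<omega>. X i \<omega> * X j \<omega>)) = expectation (\<lambda>\<omega>. X i \<omega> * X i \<omega>)" by simp
  qed
  also have "\<dots> \<le> (\<Sum>i<n. B^2)" by (rule sum_mono) (rule diag)
  also have "\<dots> = real n * B^2" by simp
  finally show ?thesis .
qed




lemma (in prob_space) wlln:
  fixes Z :: "nat \<Rightarrow> 'a \<Rightarrow> real"
  assumes ind: "indep_vars (\<lambda>_. borel) Z UNIV"
    and ident: "\<And>j. distr M borel (Z j) = distr M borel (Z 0)"
    and int: "integrable M (Z 0)"
    and eps: "\<epsilon> > 0"
  shows "(\<lambda>n. prob {\<omega>\<in>space M. \<epsilon> < \<bar>(\<Sum>j<n. Z j \<omega>) / real n - expectation (Z 0)\<bar>}) \<longlonglongrightarrow> 0"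
proof (rule LIMSEQ_I)
  fix r :: real assume r: "0 < r"
  have rv[measurable]: "\<And>j. Z j \<in> borel_measurable M" using ind unfolding indep_vars_def by auto
  have transfer: "expectation (\<lambda>\<omega>. h (Z j \<omega>)) = expectation (\<lambda>\<omega>. h (Z 0 \<omega>))"
    if [measurable]: "h \<in> borel_measurable borel" for h :: "real \<Rightarrow> real" and j
  proof -
    have "expectation (\<lambda>\<omega>. h (Z j \<omega>)) = integral\<^sup>L (distr M borel (Z j)) h" by (rule Bochner_Integration.integral_distr[symmetric]) (auto simp: that)
    also have "\<dots> = integral\<^sup>L (distr M borel (Z 0)) h" by (simp only: ident[of j])
    also have "\<dots> = expectation (\<lambda>\<omega>. h (Z 0 \<omega>))" by (rule Bochner_Integration.integral_distr) (auto simp: that)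
    finally show ?thesis .
  qed
  have tint: "integrable M (\<lambda>\<omega>. h (Z j \<omega>))"
    if [measurable]: "h \<in> borel_measurable borel" and i0: "integrable M (\<lambda>\<omega>. h (Z 0 \<omega>))" for h :: "real \<Rightarrow> real" and j
  proof -
    have "integrable (distr M borel (Z 0)) h" using i0 by (simp add: integrable_distr_eq)
    then have "integrable (distr M borel (Z j)) h" by (simp only: ident[of j])
    then show ?thesis by (simp add: integrable_distr_eq)
  qed
  have intZ: "integrable M (Z j)" for j using tint[of "\<lambda>z. z" j] int by simp
  define \<delta> where "\<delta> = \<epsilon> * min r 1 / 8"
  have \<delta>: "0 < \<delta>" using eps r by (simp add: \<delta>_def)
  obtain m :: nat where m: "\<bar>expectation (\<lambda>\<omega>. \<bar>Z 0 \<omega> - trunc (real m) (Z 0 \<omega>)\<bar>) - 0\<bar> < \<delta>"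
    using LIMSEQ_D[OF tail_small[OF int] \<delta>] by auto
  define K where "K = real m"
  define V where "V j \<omega> = trunc K (Z j \<omega>)" for j \<omega>
  define R where "R j \<omega> = \<bar>Z j \<omega> - V j \<omega>\<bar>" for j \<omega>
  define \<mu> where "\<mu> = expectation (Z 0)"
  define \<mu>K where "\<mu>K = expectation (V 0)"
  define \<tau> where "\<tau> = expectation (R 0)"
  have [measurable]: "V j \<in> borel_measurable M" "R j \<in> borel_measurable M" for j
    unfolding V_def R_def by measurable
  have K0: "0 \<le> K" by (simp add: K_def)
  have Vb: "\<bar>V j \<omega>\<bar> \<le> K" for j \<omega> by (simp add: V_def trunc_def K0)
  have intV: "integrable M (V j)" for j
    by (rule Bochner_Integration.integrable_bound[where f="\<lambda>_. K"]) (use Vb K0 in \<open>auto intro: order_trans[OF _ abs_ge_self]\<close>)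
  have intR: "integrable M (R j)" for j unfolding R_def using intZ intV by auto
  have EV: "expectation (V j) = \<mu>K" for j unfolding \<mu>K_def V_def by (rule transfer) measurable
  have ER: "expectation (R j) = \<tau>" for j unfolding \<tau>_def R_def V_def by (rule transfer) measurable
  have \<tau>: "\<tau> < \<delta>" "0 \<le> \<tau>" using m unfolding \<tau>_def R_def V_def K_def by auto
  have \<mu>diff: "\<bar>\<mu> - \<mu>K\<bar> \<le> \<tau>"
  proof -
    have "\<mu> - \<mu>K = expectation (\<lambda>\<omega>. Z 0 \<omega> - V 0 \<omega>)" unfolding \<mu>_def \<mu>K_def using intZ intV by simp
    also have "\<bar>\<dots>\<bar> \<le> expectation (R 0)" unfolding R_def
      using integral_norm_bound[of M "\<lambda>\<omega>. Z 0 \<omega> - V 0 \<omega>"] by simp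
    finally show ?thesis unfolding \<tau>_def .
  qed
  have \<mu>Kb: "\<bar>\<mu>K\<bar> \<le> K"
  proof -
    have "\<bar>\<mu>K\<bar> \<le> expectation (\<lambda>\<omega>. \<bar>V 0 \<omega>\<bar>)" unfolding \<mu>K_def
      using integral_norm_bound[of M "V 0"] by simp
    also have "\<dots> \<le> expectation (\<lambda>_. K)"
      by (rule integral_mono) (use intV Vb in auto)
    finally show ?thesis by (simp add: prob_space)
  qed
  define X where "X j \<omega> = V j \<omega> - \<mu>K" for j \<omega>
  have indX: "indep_vars (\<lambda>_. borel) X UNIV"
    unfolding X_def V_def by (rule indep_vars_compose2[OF ind]) measurable
  have Xb: "\<bar>X j \<omega>\<bar> \<le> 2*K" for j \<omega> using Vb[of j \<omega>] \<mu>Kb unfolding X_def by linarith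
  have EX: "expectation (X j) = 0" for j using intV EV unfolding X_def by (simp add: prob_space)
  have SQ: "expectation (\<lambda>\<omega>. (\<Sum>j<n. X j \<omega>)^2) \<le> real n * (2*K)^2" for n
    by (rule sum_sq_bound[OF indX]) (use Xb EX in auto)
  have [measurable]: "X j \<in> borel_measurable M" for j unfolding X_def by measurable
  obtain N :: nat where N: "32 * K^2 / (r * \<epsilon>^2) < real N" using reals_Archimedean2 by blast
  show "\<exists>no. \<forall>n\<ge>no. norm (prob {\<omega>\<in>space M. \<epsilon> < \<bar>(\<Sum>j<n. Z j \<omega>) / real n - expectation (Z 0)\<bar>} - 0) < r"
  proof (intro exI allI impI)
    fix n assume n: "Suc N \<le> n"
    then have npos: "0 < real n" by simp
    have nN: "32 * K^2 / (r * \<epsilon>^2) < real n" using N n by linarith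
    define A where "A = {\<omega>\<in>space M. (\<epsilon>/2)^2 \<le> ((\<Sum>j<n. X j \<omega>) / real n)^2}"
    define B where "B = {\<omega>\<in>space M. \<epsilon>/4 \<le> (\<Sum>j<n. R j \<omega>) / real n}"
    have [measurable]: "A \<in> sets M" "B \<in> sets M" unfolding A_def B_def by measurable
    have sub: "{\<omega>\<in>space M. \<epsilon> < \<bar>(\<Sum>j<n. Z j \<omega>) / real n - expectation (Z 0)\<bar>} \<subseteq> A \<union> B"
    proof
      fix \<omega> assume \<omega>: "\<omega> \<in> {\<omega>\<in>space M. \<epsilon> < \<bar>(\<Sum>j<n. Z j \<omega>) / real n - expectation (Z 0)\<bar>}"
      show "\<omega> \<in> A \<union> B"
      proof (rule ccontr)
        assume "\<omega> \<notin> A \<union> B"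
        then have a: "((\<Sum>j<n. X j \<omega>) / real n)^2 < (\<epsilon>/2)^2" and b: "(\<Sum>j<n. R j \<omega>) / real n < \<epsilon>/4"
          using \<omega> by (auto simp: A_def B_def)
        from a have a': "\<bar>(\<Sum>j<n. X j \<omega>) / real n\<bar> < \<epsilon>/2"
          using eps by (metis abs_of_pos half_gt_zero power2_abs power_less_imp_less_base abs_ge_zero)
        have decomp: "(\<Sum>j<n. Z j \<omega>) / real n - \<mu> = (\<Sum>j<n. X j \<omega>) / real n + (\<Sum>j<n. Z j \<omega> - V j \<omega>) / real n - (\<mu> - \<mu>K)"
        proof -
          have e1: "(\<Sum>j<n. X j \<omega>) = (\<Sum>j<n. V j \<omega>) - real n * \<mu>K" by (simp add: X_def sum_subtractf)
          have e2: "(\<Sum>j<n. Z j \<omega> - V j \<omega>) = (\<Sum>j<n. Z j \<omega>) - (\<Sum>j<n. V j \<omega>)" by (simp add: sum_subtractf)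
          show ?thesis unfolding e1 e2 using npos by (simp add: diff_divide_distrib)
        qed
        have "\<bar>(\<Sum>j<n. Z j \<omega> - V j \<omega>)\<bar> \<le> (\<Sum>j<n. R j \<omega>)" unfolding R_def by (rule sum_abs)
        then have c: "\<bar>(\<Sum>j<n. Z j \<omega> - V j \<omega>) / real n\<bar> \<le> (\<Sum>j<n. R j \<omega>) / real n"
          using npos by (simp add: divide_right_mono)
        have "\<bar>(\<Sum>j<n. Z j \<omega>) / real n - \<mu>\<bar> < \<epsilon>/2 + \<epsilon>/4 + \<delta>"
          unfolding decomp using a' b c \<mu>diff \<tau> by linarith
        moreover have "\<delta> \<le> \<epsilon>/8" using eps by (simp add: \<delta>_def)
        ultimately show False using \<omega> unfolding \<mu>_def by auto
      qed
    qed
    have PA: "prob A \<le> 16*K^2/(real n * \<epsilon>^2)"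
    proof -
      have intS: "integrable M (\<lambda>\<omega>. ((\<Sum>j<n. X j \<omega>) / real n)^2)"
      proof (rule Bochner_Integration.integrable_bound[where f="\<lambda>_. (real n * (2*K))^2"])
        show "AE \<omega> in M. norm (((\<Sum>j<n. X j \<omega>) / real n)^2) \<le> norm ((real n * (2*K))^2)"
        proof (rule AE_I2)
          fix \<omega>
          have "\<bar>\<Sum>j<n. X j \<omega>\<bar> \<le> (\<Sum>j<n. \<bar>X j \<omega>\<bar>)" by (rule sum_abs)
          also have "\<dots> \<le> (\<Sum>j<n. 2*K)" by (rule sum_mono) (rule Xb)
          finally have s: "\<bar>\<Sum>j<n. X j \<omega>\<bar> \<le> real n * (2*K)" by simp
          have "\<bar>(\<Sum>j<n. X j \<omega>) / real n\<bar> = \<bar>\<Sum>j<n. X j \<omega>\<bar> / real n" by (simp add: abs_divide)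
          also have "\<dots> \<le> (real n * (2*K)) / real n" by (rule divide_right_mono[OF s]) simp
          also have "\<dots> \<le> real n * (2*K)"
          proof -
            have "1 \<le> real n" using n by simp
            then have "K \<le> real n * K" using K0 by (simp add: mult_le_cancel_right1)
            then show ?thesis using npos by simp
          qed
          finally have "\<bar>(\<Sum>j<n. X j \<omega>) / real n\<bar> \<le> real n * (2*K)" .
          then have "\<bar>(\<Sum>j<n. X j \<omega>) / real n\<bar>^2 \<le> (real n * (2*K))^2"
            by (rule power_mono) simp
          then show "norm (((\<Sum>j<n. X j \<omega>) / real n)^2) \<le> norm ((real n * (2*K))^2)"
            by (metis power2_abs real_norm_def abs_power2)
        qed
      qed auto
      have "prob A \<le> expectation (\<lambda>\<omega>. ((\<Sum>j<n. X j \<omega>) / real n)^2) / (\<epsilon>/2)^2"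
        unfolding A_def by (rule integral_Markov_inequality_measure[OF intS, where A="space M"]) (use eps in auto)
      also have "expectation (\<lambda>\<omega>. ((\<Sum>j<n. X j \<omega>) / real n)^2) = expectation (\<lambda>\<omega>. (\<Sum>j<n. X j \<omega>)^2) / (real n)^2"
        by (simp add: power_divide)
      also have "\<dots> \<le> real n * (2*K)^2 / (real n)^2" by (rule divide_right_mono[OF SQ]) simp
      also have "real n * (2*K)^2 / (real n)^2 = 4*K^2 / real n" using npos by (simp add: power2_eq_square)
      finally show ?thesis using eps by (simp add: field_simps power2_eq_square)
    qed
    have PB: "prob B \<le> 4 * \<tau> / \<epsilon>"
    proof -
      have intS: "integrable M (\<lambda>\<omega>. (\<Sum>j<n. R j \<omega>) / real n)" using intR by auto
      have "prob B \<le> expectation (\<lambda>\<omega>. (\<Sum>j<n. R j \<omega>) / real n) / (\<epsilon>/4)"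
        unfolding B_def by (rule integral_Markov_inequality_measure[OF intS, where A="space M"])
          (use eps in \<open>auto simp: R_def intro!: sum_nonneg\<close>)
      also have "expectation (\<lambda>\<omega>. (\<Sum>j<n. R j \<omega>) / real n) = \<tau>"
        using npos intR by (simp add: Bochner_Integration.integral_sum ER)
      finally show ?thesis by (simp add: mult.commute)
    qed
    have "prob {\<omega>\<in>space M. \<epsilon> < \<bar>(\<Sum>j<n. Z j \<omega>) / real n - expectation (Z 0)\<bar>} \<le> prob (A \<union> B)"
      by (rule measure_le_sets) (use sub in auto)
    also have "\<dots> \<le> prob A + prob B" by (rule measure_Un_le) auto
    also have "\<dots> < r"
    proof -
      have "16*K^2/(real n * \<epsilon>^2) < r/2"
        using nN r eps npos by (simp add: field_simps)
      moreover have "4 * \<tau> / \<epsilon> < r/2"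
      proof -
        have "4 * \<tau> < 4 * \<delta>" using \<tau> by simp
        also have "4 * \<delta> \<le> r/2 * \<epsilon>" using eps r by (simp add: \<delta>_def)
        finally show ?thesis using eps by (simp add: field_simps)
      qed
      ultimately show ?thesis using PA PB by linarith
    qed
    finally show "norm (prob {\<omega>\<in>space M. \<epsilon> < \<bar>(\<Sum>j<n. Z j \<omega>) / real n - expectation (Z 0)\<bar>} - 0) < r"
      by simp
  qed
qed



definition goodp :: "real \<Rightarrow> real \<Rightarrow> real \<Rightarrow> real \<Rightarrow> real \<Rightarrow> real \<times> real \<Rightarrow> bool" where
  "goodp t_o s \<theta> xo yo p \<longleftrightarrow> t_star t_o s \<theta> xo yo (fst p) (snd p) > t_o"

definition rt :: "real \<Rightarrow> real \<Rightarrow> real \<Rightarrow> real \<Rightarrow> real \<Rightarrow> nat \<Rightarrow> real \<times> real \<Rightarrow> real" where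
  "rt t_o s \<theta> xo yo lam p = 2 * real lam / (t_star t_o s \<theta> xo yo (fst p) (snd p) - t_o)"

definition kern :: "real \<Rightarrow> real \<Rightarrow> real \<Rightarrow> real \<Rightarrow> real \<Rightarrow> nat \<Rightarrow> (real \<times> real) \<times> real \<Rightarrow> real" where
  "kern t_o s \<theta> xo yo lam q = (if goodp t_o s \<theta> xo yo (fst q)
      then erlang_density (2 * lam - 1) (rt t_o s \<theta> xo yo lam (fst q)) (snd q) else 0)"

lemma kern_meas_pair: "kern t_o s \<theta> xo yo lam \<in> borel_measurable ((borel \<Otimes>\<^sub>M borel) \<Otimes>\<^sub>M borel)"
  unfolding kern_def goodp_def rt_def t_star_def erlang_density_def by measurable

lemma kern_meas[measurable]: "kern t_o s \<theta> xo yo lam \<in> borel_measurable borel"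
  using kern_meas_pair unfolding borel_prod .

lemma goodp_meas_pair: "{p \<in> space (borel \<Otimes>\<^sub>M borel). goodp t_o s \<theta> xo yo p} \<in> sets (borel \<Otimes>\<^sub>M borel)"
  unfolding goodp_def t_star_def by measurable

lemma ts_meas_pair: "(\<lambda>p. t_star t_o s \<theta> xo yo (fst p) (snd p)) \<in> borel_measurable (borel \<Otimes>\<^sub>M borel)"
  unfolding t_star_def by measurable

lemma ts_meas[measurable]: "(\<lambda>p. t_star t_o s \<theta> xo yo (fst p) (snd p)) \<in> borel_measurable borel"
  using ts_meas_pair unfolding borel_prod .

lemma goodp_meas[measurable]: "{p \<in> space borel. goodp t_o s \<theta> xo yo p} \<in> sets borel"
  using goodp_meas_pair unfolding borel_prod .

lemma kern_nonneg: "0 \<le> kern t_o s \<theta> xo yo lam q"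
  unfolding kern_def goodp_def rt_def by (auto intro!: erlang_density_nonneg)

locale setting =
  fixes M :: "'a measure"
    and xs ys T :: "nat \<Rightarrow> 'a \<Rightarrow> real"
    and t_o s \<theta> xo yo :: real
    and lam :: nat
  assumes prob: "prob_space M"
    and s_pos: "s > 0"
    and lam_pos: "lam \<ge> 1"
    and meas_x: "\<And>j. xs j \<in> borel_measurable M"
    and meas_y: "\<And>j. ys j \<in> borel_measurable M"
    and meas_T: "\<And>j. T j \<in> borel_measurable M"
    and indep: "prob_space.indep_vars M (\<lambda>_. borel) (\<lambda>j \<omega>. (xs j \<omega>, ys j \<omega>, T j \<omega>)) UNIV"
    and ident: "\<And>j. distr M borel (\<lambda>\<omega>. (xs j \<omega>, ys j \<omega>)) = distr M borel (\<lambda>\<omega>. (xs 0 \<omega>, ys 0 \<omega>))"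
    and int_x2: "integrable M (\<lambda>\<omega>. (xs 0 \<omega>)\<^sup>2)"
    and int_y2: "integrable M (\<lambda>\<omega>. (ys 0 \<omega>)\<^sup>2)"
    and mean_x: "(\<integral>\<omega>. xs 0 \<omega> \<partial>M) = 0"
    and mean_y: "(\<integral>\<omega>. ys 0 \<omega> \<partial>M) = 0"
    and nonsing: "det (vector [vector [covar M (xs 0) (xs 0), covar M (xs 0) (ys 0)],
                               vector [covar M (ys 0) (xs 0), covar M (ys 0) (ys 0)]] :: real^2^2) \<noteq> 0"
    and after: "\<And>j. AE \<omega> in M. t_star t_o s \<theta> xo yo (xs j \<omega>) (ys j \<omega>) > t_o"
    and cond_law: "\<And>j A B. A \<in> sets (borel :: (real \<times> real) measure) \<Longrightarrow> B \<in> sets (borel :: real measure) \<Longrightarrow>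
        emeasure M {\<omega> \<in> space M. (xs j \<omega>, ys j \<omega>) \<in> A \<and> T j \<omega> - t_o \<in> B}
        = (\<integral>\<^sup>+ p. indicator A p *
              emeasure (density lborel (erlang_density (2 * lam - 1)
                 (2 * real lam / (t_star t_o s \<theta> xo yo (fst p) (snd p) - t_o)))) B
            \<partial>(distr M borel (\<lambda>\<omega>. (xs j \<omega>, ys j \<omega>))))"
begin

interpretation P: prob_space M by (rule prob)

declare meas_x[measurable] meas_y[measurable] meas_T[measurable]

definition "D = distr M borel (\<lambda>\<omega>. (xs 0 \<omega>, ys 0 \<omega>))"
definition "KK = density (D \<Otimes>\<^sub>M lborel) (\<lambda>q. ennreal (kern t_o s \<theta> xo yo lam q))"

lemma sets_D[measurable_cong]: "sets D = sets borel" by (simp add: D_def)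
lemma space_D: "space D = UNIV" by (simp add: D_def)

lemma sets_DL: "sets (D \<Otimes>\<^sub>M lborel) = sets (borel :: ((real \<times> real) \<times> real) measure)"
proof -
  have "sets (D \<Otimes>\<^sub>M lborel) = sets (borel \<Otimes>\<^sub>M borel)" by (intro sets_pair_measure_cong) (simp_all add: sets_D)
  also have "\<dots> = sets (borel :: ((real \<times> real) \<times> real) measure)" unfolding borel_prod ..
  finally show ?thesis .
qed

lemma kern_meas_DL[measurable]: "kern t_o s \<theta> xo yo lam \<in> borel_measurable (D \<Otimes>\<^sub>M lborel)"
  by (subst measurable_cong_sets[OF sets_DL refl]) (rule kern_meas)

lemma prob_D: "prob_space D" unfolding D_def by (rule P.prob_space_distr) simp

lemma AE_good: "AE p in D. goodp t_o s \<theta> xo yo p"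
proof -
  have "AE \<omega> in M. goodp t_o s \<theta> xo yo (xs 0 \<omega>, ys 0 \<omega>)"
    using after[of 0] by (simp add: goodp_def)
  then show ?thesis unfolding D_def
    by (subst AE_distr_iff) auto
qed

lemma joint: "distr M borel (\<lambda>\<omega>. ((xs j \<omega>, ys j \<omega>), T j \<omega> - t_o)) = KK"
proof -
  interpret D: prob_space D by (rule prob_D)
  interpret DL: pair_sigma_finite D lborel ..
  let ?E = "{a \<times> b | a b. a \<in> sets (borel :: (real \<times> real) measure) \<and> b \<in> sets (borel :: real measure)}"
  have setsE: "sets (borel :: ((real \<times> real) \<times> real) measure) = sigma_sets UNIV ?E"
    using sets_pair_measure[of "borel :: (real \<times> real) measure" "borel :: real measure"]
    unfolding borel_prod by simp
  show ?thesis
  proof (rule measure_eqI_generator_eq[where E="?E" and \<Omega>=UNIV and A="\<lambda>_. UNIV"])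
    show "Int_stable ?E" by (rule Int_stable_pair_measure_generator)
    show "?E \<subseteq> Pow UNIV" by auto
    show "sets (distr M borel (\<lambda>\<omega>. ((xs j \<omega>, ys j \<omega>), T j \<omega> - t_o))) = sigma_sets UNIV ?E"
      using setsE by simp
    have "sets KK = sets (D \<Otimes>\<^sub>M lborel)" by (simp add: KK_def)
    also have "\<dots> = sets (borel \<Otimes>\<^sub>M borel)" by (intro sets_pair_measure_cong) (simp_all add: sets_D)
    also have "\<dots> = sets (borel :: ((real \<times> real) \<times> real) measure)" unfolding borel_prod ..
    finally show "sets KK = sigma_sets UNIV ?E" using setsE by simp
    show "range (\<lambda>_. UNIV) \<subseteq> ?E" by (auto intro!: exI[of _ UNIV])
    show "(\<Union>i::nat. UNIV) = UNIV" by simp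
    show "emeasure (distr M borel (\<lambda>\<omega>. ((xs j \<omega>, ys j \<omega>), T j \<omega> - t_o))) UNIV \<noteq> \<infinity>"
      by (subst emeasure_distr) (auto simp: P.emeasure_space_1[simplified])
    fix X assume "X \<in> ?E"
    then obtain a b where X: "X = a \<times> b" and a[measurable]: "a \<in> sets (borel :: (real \<times> real) measure)"
        and b[measurable]: "b \<in> sets (borel :: real measure)" by auto
    have ab[measurable]: "a \<times> b \<in> sets (borel :: ((real \<times> real) \<times> real) measure)"
      using pair_measureI[OF a b] unfolding borel_prod .
    have "emeasure (distr M borel (\<lambda>\<omega>. ((xs j \<omega>, ys j \<omega>), T j \<omega> - t_o))) X
        = emeasure M {\<omega> \<in> space M. (xs j \<omega>, ys j \<omega>) \<in> a \<and> T j \<omega> - t_o \<in> b}"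
      unfolding X by (subst emeasure_distr) (auto intro!: arg_cong2[where f=emeasure])
    also have "\<dots> = (\<integral>\<^sup>+ p. indicator a p *
              emeasure (density lborel (erlang_density (2 * lam - 1)
                 (2 * real lam / (t_star t_o s \<theta> xo yo (fst p) (snd p) - t_o)))) b \<partial>D)"
      using cond_law[OF a b] by (simp add: D_def ident[of j])
    also have "\<dots> = (\<integral>\<^sup>+ p. \<integral>\<^sup>+ t. ennreal (kern t_o s \<theta> xo yo lam (p, t)) * indicator X (p, t) \<partial>lborel \<partial>D)"
    proof (rule nn_integral_cong_AE)
      show "AE p in D. indicator a p * emeasure (density lborel (erlang_density (2 * lam - 1)
                 (2 * real lam / (t_star t_o s \<theta> xo yo (fst p) (snd p) - t_o)))) b
           = (\<integral>\<^sup>+ t. ennreal (kern t_o s \<theta> xo yo lam (p, t)) * indicator X (p, t) \<partial>lborel)"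
        using AE_good
      proof eventually_elim
        case (elim p)
        have "(\<integral>\<^sup>+ t. ennreal (kern t_o s \<theta> xo yo lam (p, t)) * indicator X (p, t) \<partial>lborel)
            = (\<integral>\<^sup>+ t. indicator a p * (ennreal (erlang_density (2 * lam - 1) (rt t_o s \<theta> xo yo lam p) t) * indicator b t) \<partial>lborel)"
          using elim by (intro nn_integral_cong) (auto simp: kern_def X split: split_indicator)
        also have "\<dots> = indicator a p * (\<integral>\<^sup>+ t. ennreal (erlang_density (2 * lam - 1) (rt t_o s \<theta> xo yo lam p) t) * indicator b t \<partial>lborel)"
          by (rule nn_integral_cmult) (auto simp: erlang_density_def)
        also have "\<dots> = indicator a p * emeasure (density lborel (erlang_density (2 * lam - 1) (rt t_o s \<theta> xo yo lam p))) b"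
          by (subst emeasure_density) (auto simp: erlang_density_def)
        finally show ?case by (simp add: rt_def)
      qed
    qed
    also have "\<dots> = (\<integral>\<^sup>+ q. ennreal (kern t_o s \<theta> xo yo lam q) * indicator X q \<partial>(D \<Otimes>\<^sub>M lborel))"
      by (rule lborel.nn_integral_fst[where f="\<lambda>q. ennreal (kern t_o s \<theta> xo yo lam q) * indicator X q", simplified]) (simp add: X measurable_cong_sets[OF sets_DL refl])
    also have "\<dots> = emeasure KK X"
      unfolding KK_def by (subst emeasure_density) (auto simp: X)
    finally show "emeasure (distr M borel (\<lambda>\<omega>. ((xs j \<omega>, ys j \<omega>), T j \<omega> - t_o))) X = emeasure KK X" .
  qed
qed

end


lemma erl_mom:
  assumes l: "0 < l"
  shows "has_bochner_integral lborel (\<lambda>t. erlang_density k l t * t) (real (Suc k) / l)"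
proof (rule has_bochner_integral_nn_integral)
  show "(\<lambda>t. erlang_density k l t * t) \<in> borel_measurable lborel"
    unfolding erlang_density_def by measurable
  show "AE t in lborel. 0 \<le> erlang_density k l t * t"
    using l by (auto simp: erlang_density_def)
  show "0 \<le> real (Suc k) / l" using l by simp
  have "(\<integral>\<^sup>+ t. ennreal (erlang_density k l t * t ^ 1) \<partial>lborel) = ennreal (fact (k + 1) / (fact k * l ^ 1))"
    using nn_integral_erlang_ith_moment[OF l, of k 1] by simp
  also have "fact (k + 1) / (fact k * l ^ 1) = real (Suc k) / l"
  proof -
    have f: "(fact k :: real) \<noteq> 0" by simp
    have "fact (k + 1) = real (Suc k) * (fact k :: real)" by (simp add: fact_Suc)
    then show ?thesis using f l by (simp add: field_simps)
  qed
  finally show "(\<integral>\<^sup>+ t. ennreal (erlang_density k l t * t) \<partial>lborel) = ennreal (real (Suc k) / l)" by simp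
qed

lemma erl_abs: "0 < l \<Longrightarrow> \<bar>erlang_density k l t * t\<bar> = erlang_density k l t * t"
  by (auto simp: erlang_density_def)

context setting begin

interpretation P: prob_space M by (rule prob)

lemma kern_good:
  assumes "goodp t_o s \<theta> xo yo p"
  shows "kern t_o s \<theta> xo yo lam (p, t) = erlang_density (2 * lam - 1) (rt t_o s \<theta> xo yo lam p) t"
    and "0 < rt t_o s \<theta> xo yo lam p"
    and "real (Suc (2 * lam - 1)) / rt t_o s \<theta> xo yo lam p = t_star t_o s \<theta> xo yo (fst p) (snd p) - t_o"
  using assms lam_pos by (auto simp: kern_def rt_def goodp_def)

lemma mom:
  fixes h :: "real \<times> real \<Rightarrow> real"
  assumes h[measurable]: "h \<in> borel_measurable borel"
    and hint: "integrable D (\<lambda>p. h p * (t_star t_o s \<theta> xo yo (fst p) (snd p) - t_o))"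
  shows "integrable KK (\<lambda>q. h (fst q) * snd q)"
    and "integral\<^sup>L KK (\<lambda>q. h (fst q) * snd q) = (\<integral>p. h p * (t_star t_o s \<theta> xo yo (fst p) (snd p) - t_o) \<partial>D)"
proof -
  interpret D: prob_space D by (rule prob_D)
  interpret DL: pair_sigma_finite D lborel ..
  let ?k = "kern t_o s \<theta> xo yo lam"
  let ?F = "\<lambda>q. ?k q *\<^sub>R (h (fst q) * snd q)"
  let ?ts = "\<lambda>p. t_star t_o s \<theta> xo yo (fst p) (snd p) - t_o"
  have Fm[measurable]: "?F \<in> borel_measurable (D \<Otimes>\<^sub>M lborel)"
    by measurable
  have inner: "has_bochner_integral lborel (\<lambda>t. ?F (p, t)) (h p * ?ts p)"
    and inner_abs: "has_bochner_integral lborel (\<lambda>t. norm (?F (p, t))) (\<bar>h p\<bar> * ?ts p)"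
    if g: "goodp t_o s \<theta> xo yo p" for p
  proof -
    note kg = kern_good[OF g]
    let ?e = "\<lambda>t. erlang_density (2 * lam - 1) (rt t_o s \<theta> xo yo lam p) t * t"
    have "has_bochner_integral lborel (\<lambda>t. h p * ?e t) (h p * ?ts p)"
      using has_bochner_integral_mult_right[OF erl_mom[OF kg(2), of "2 * lam - 1"], of "h p"] unfolding kg(3) .
    moreover have "(\<lambda>t. ?F (p, t)) = (\<lambda>t. h p * ?e t)"
      by (rule ext) (simp add: kg(1) mult_ac)
    ultimately show "has_bochner_integral lborel (\<lambda>t. ?F (p, t)) (h p * ?ts p)" by simp
    have "has_bochner_integral lborel (\<lambda>t. \<bar>h p\<bar> * ?e t) (\<bar>h p\<bar> * ?ts p)"
      using has_bochner_integral_mult_right[OF erl_mom[OF kg(2), of "2 * lam - 1"], of "\<bar>h p\<bar>"] unfolding kg(3) .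
    moreover have "(\<lambda>t. norm (?F (p, t))) = (\<lambda>t. \<bar>h p\<bar> * ?e t)"
      by (rule ext) (use kg erl_abs[OF kg(2)] in \<open>simp add: abs_mult mult_ac\<close>)
    ultimately show "has_bochner_integral lborel (\<lambda>t. norm (?F (p, t))) (\<bar>h p\<bar> * ?ts p)" by simp
  qed
  have intF: "integrable (D \<Otimes>\<^sub>M lborel) ?F"
  proof (rule DL.Fubini_integrable[OF Fm])
    have "integrable D (\<lambda>p. \<bar>h p * ?ts p\<bar>)" using hint by auto
    then show "integrable D (\<lambda>p. \<integral>t. norm (?F (p, t)) \<partial>lborel)"
    proof (rule integrable_cong_AE_imp)
      show "(\<lambda>p. \<integral>t. norm (?F (p, t)) \<partial>lborel) \<in> borel_measurable D"
        by measurable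
      show "AE p in D. \<bar>h p * ?ts p\<bar> = (\<integral>t. norm (?F (p, t)) \<partial>lborel)"
        using AE_good
      proof eventually_elim
        case (elim p)
        then have "?ts p > 0" by (simp add: goodp_def)
        then show ?case using has_bochner_integral_integral_eq[OF inner_abs[OF elim]] by (simp add: abs_mult)
      qed
    qed
    show "AE p in D. integrable lborel (\<lambda>t. ?F (p, t))"
      using AE_good by eventually_elim (rule integrable.intros[OF inner])
  qed
  have nn: "AE q in D \<Otimes>\<^sub>M lborel. 0 \<le> ?k q" by (simp add: kern_nonneg)
  have m1: "(\<lambda>q. h (fst q) * snd q) \<in> borel_measurable (D \<Otimes>\<^sub>M lborel)"
    by measurable
  show "integrable KK (\<lambda>q. h (fst q) * snd q)"
    unfolding KK_def using intF by (subst integrable_density) (auto simp: m1 nn)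
  have "integral\<^sup>L KK (\<lambda>q. h (fst q) * snd q) = integral\<^sup>L (D \<Otimes>\<^sub>M lborel) ?F"
    unfolding KK_def by (rule integral_density) (auto simp: m1 nn)
  also have "\<dots> = (\<integral>p. (\<integral>t. ?F (p, t) \<partial>lborel) \<partial>D)"
    by (rule DL.integral_fst'[OF intF, symmetric])
  also have "\<dots> = (\<integral>p. h p * ?ts p \<partial>D)"
  proof (rule integral_cong_AE)
    show "(\<lambda>p. \<integral>t. ?F (p, t) \<partial>lborel) \<in> borel_measurable D"
      by measurable
    show "(\<lambda>p. h p * ?ts p) \<in> borel_measurable D"
      by measurable
    show "AE p in D. (\<integral>t. ?F (p, t) \<partial>lborel) = h p * ?ts p"
      using AE_good by eventually_elim (use inner in \<open>auto intro: has_bochner_integral_integral_eq\<close>)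
  qed
  finally show "integral\<^sup>L KK (\<lambda>q. h (fst q) * snd q) = (\<integral>p. h p * ?ts p \<partial>D)" .
qed

end


lemma mvbound:
  fixes A :: "real^'n^'m"
  shows "norm (A *v u) \<le> (\<Sum>i\<in>UNIV. \<Sum>k\<in>UNIV. \<bar>A$i$k\<bar>) * norm u"
proof -
  have "norm (A *v u) \<le> (\<Sum>i\<in>UNIV. \<bar>(A *v u)$i\<bar>)" by (rule norm_le_l1_cart)
  also have "\<dots> \<le> (\<Sum>i\<in>UNIV. (\<Sum>k\<in>UNIV. \<bar>A$i$k\<bar>) * norm u)"
  proof (rule sum_mono)
    fix i
    have "\<bar>(A *v u)$i\<bar> = \<bar>\<Sum>k\<in>UNIV. A$i$k * u$k\<bar>" by (simp add: matrix_vector_mult_def)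
    also have "\<dots> \<le> (\<Sum>k\<in>UNIV. \<bar>A$i$k * u$k\<bar>)" by (rule sum_abs)
    also have "\<dots> \<le> (\<Sum>k\<in>UNIV. \<bar>A$i$k\<bar> * norm u)"
      by (rule sum_mono) (simp add: abs_mult mult_left_mono component_le_norm_cart)
    finally show "\<bar>(A *v u)$i\<bar> \<le> (\<Sum>k\<in>UNIV. \<bar>A$i$k\<bar>) * norm u" by (simp add: sum_distrib_right)
  qed
  also have "\<dots> = (\<Sum>i\<in>UNIV. \<Sum>k\<in>UNIV. \<bar>A$i$k\<bar>) * norm u" by (simp add: sum_distrib_right)
  finally show ?thesis .
qed

lemma matrix_inv_right:
  fixes H :: "'a::field^'n^'n"
  assumes "invertible H"
  shows "H ** matrix_inv H = mat 1"
proof -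
  from assms obtain H' where "H ** H' = mat 1 \<and> H' ** H = mat 1" unfolding invertible_def by blast
  then have "H ** matrix_inv H = mat 1 \<and> matrix_inv H ** H = mat 1"
    unfolding matrix_inv_def by (rule someI)
  then show ?thesis by simp
qed

lemma det_lemma:
  fixes G H :: "real^'n^'n" and X b :: "real^'n"
  assumes c: "c > 0" "\<And>u. c * norm u \<le> norm (G *v u)"
    and r: "r > 0"
    and e: "(\<Sum>i\<in>UNIV. \<Sum>k\<in>UNIV. \<bar>H$i$k / r - G$i$k\<bar>) \<le> e" "e \<le> c/2"
    and bb: "norm ((1/r) *\<^sub>R b - G *v X) \<le> \<beta>"
  shows "invertible H" "norm (matrix_inv H *v b - X) \<le> 2/c * (\<beta> + e * norm X)"
proof -
  define E where "E = (\<chi> i k. H$i$k / r - G$i$k)"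
  have HE: "(1/r) *\<^sub>R (H *v u) = G *v u + E *v u" for u
  proof (rule vec_eq_iff[THEN iffD2, rule_format])
    fix i
    have "(1/r) * (\<Sum>k\<in>UNIV. H$i$k * u$k) = (\<Sum>k\<in>UNIV. (1/r) * (H$i$k * u$k))"
      by (rule sum_distrib_left)
    also have "\<dots> = (\<Sum>k\<in>UNIV. G$i$k * u$k + (H$i$k / r - G$i$k) * u$k)"
      by (rule sum.cong) (use r in \<open>auto simp: field_simps\<close>)
    also have "\<dots> = (\<Sum>k\<in>UNIV. G$i$k * u$k) + (\<Sum>k\<in>UNIV. (H$i$k / r - G$i$k) * u$k)"
      by (rule sum.distrib)
    finally show "((1/r) *\<^sub>R (H *v u)) $ i = (G *v u + E *v u) $ i"
      by (simp add: E_def matrix_vector_mult_def)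
  qed
  have Eb: "norm (E *v u) \<le> e * norm u" for u
  proof -
    have "norm (E *v u) \<le> (\<Sum>i\<in>UNIV. \<Sum>k\<in>UNIV. \<bar>E$i$k\<bar>) * norm u" by (rule mvbound)
    also have "\<dots> \<le> e * norm u" using e(1) by (intro mult_right_mono) (simp_all add: E_def)
    finally show ?thesis .
  qed
  have low: "c/2 * norm u \<le> norm ((1/r) *\<^sub>R (H *v u))" for u
  proof -
    have "norm (G *v u) \<le> norm (G *v u + E *v u) + norm (E *v u)"
      by (metis add_diff_cancel_right' norm_triangle_ineq4)
    then have "c * norm u - e * norm u \<le> norm ((1/r) *\<^sub>R (H *v u))"
      unfolding HE using c(2)[of u] Eb[of u] by linarith
    moreover have "e * norm u \<le> c/2 * norm u" by (rule mult_right_mono[OF e(2)]) simp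
    then have "c/2 * norm u \<le> c * norm u - e * norm u" by linarith
    ultimately show ?thesis by linarith
  qed
  have inj: "inj ((*v) H)"
  proof (rule injI)
    fix u w assume "H *v u = H *v w"
    then have "H *v (u - w) = 0" by (simp add: matrix_vector_mult_diff_distrib)
    then have "c/2 * norm (u - w) \<le> 0" using low[of "u - w"] by simp
    then show "u = w" using c(1) by (simp add: mult_le_0_iff)
  qed
  then show inv: "invertible H"
    using matrix_left_invertible_injective invertible_left_inverse by blast
  define v where "v = matrix_inv H *v b - X"
  have Hv: "H *v v = b - H *v X"
    using matrix_inv_right[OF inv]
    by (simp add: v_def matrix_vector_mult_diff_distrib matrix_vector_mul_assoc)
  have eqv: "(1/r) *\<^sub>R (H *v v) = ((1/r) *\<^sub>R b - G *v X) - E *v X"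
    using HE[of X] unfolding Hv by (simp add: algebra_simps)
  have "norm ((1/r) *\<^sub>R (H *v v)) \<le> \<beta> + e * norm X"
    unfolding eqv using bb Eb[of X] norm_triangle_ineq4[of "(1/r) *\<^sub>R b - G *v X" "E *v X"] by linarith
  then have "c/2 * norm v \<le> \<beta> + e * norm X" using low[of v] by linarith
  then show "norm (matrix_inv H *v b - X) \<le> 2/c * (\<beta> + e * norm X)"
    using c(1) unfolding v_def[symmetric] by (simp add: field_simps)
qed



definition cmp :: "3 \<Rightarrow> real \<times> real \<Rightarrow> real" where
  "cmp i p = (vector [fst p, snd p, 1] :: real^3) $ i"

lemma comp_cases: "cmp i p = fst p \<or> cmp i p = snd p \<or> cmp i p = 1"
  using exhaust_3[of i] by (auto simp: cmp_def)

lemma comp_simps[simp]: "cmp 1 p = fst p" "cmp 2 p = snd p" "cmp 3 p = 1" "cmp 3 = (\<lambda>_. 1)"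
  by (simp_all add: cmp_def fun_eq_iff)

lemma comp_meas[measurable]: "cmp i \<in> borel_measurable borel"
proof -
  have "cmp i = fst \<or> cmp i = snd \<or> cmp i = (\<lambda>_. 1)"
    using exhaust_3[of i] by (auto simp: fun_eq_iff)
  then have "continuous_on UNIV (cmp i)"
    by (auto intro!: continuous_intros)
  then show ?thesis by (rule borel_measurable_continuous_onI)
qed

lemma fst_meas_rr[measurable]: "(fst :: real \<times> real \<Rightarrow> real) \<in> borel_measurable borel"
  by (rule borel_measurable_continuous_onI) (intro continuous_intros)

lemma snd_meas_rr[measurable]: "(snd :: real \<times> real \<Rightarrow> real) \<in> borel_measurable borel"
  by (rule borel_measurable_continuous_onI) (intro continuous_intros)

lemma row_comp: "A1_row xs ys j $ i = cmp i (xs j, ys j)"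
  by (simp add: A1_row_def cmp_def)

lemma comp_sq: "(cmp i p)^2 \<le> (fst p)^2 + (snd p)^2 + 1"
  using comp_cases[of i p] by auto

lemma prod_bound: "\<bar>a * b\<bar> \<le> (a^2 + b^2) / 2" for a b :: real
proof -
  have "0 \<le> (\<bar>a\<bar> - \<bar>b\<bar>)^2" by simp
  then show ?thesis by (simp add: power2_eq_square algebra_simps abs_mult)
qed

lemma comp_prod_bound: "\<bar>cmp i p * cmp k p\<bar> \<le> (fst p)^2 + (snd p)^2 + 1"
proof -
  have "(cmp i p)^2 + (cmp k p)^2 \<le> ((fst p)^2 + (snd p)^2 + 1) + ((fst p)^2 + (snd p)^2 + 1)"
    by (rule add_mono[OF comp_sq comp_sq])
  moreover have gen: "\<And>a b c d F::real. c \<le> (d) / 2 \<Longrightarrow> d \<le> F + F \<Longrightarrow> c \<le> F" by linarith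
  ultimately show ?thesis using prod_bound[of "cmp i p" "cmp k p"] by (metis gen)
qed

lemma ts_lin:
  assumes "s > 0"
  shows "t_star t_o s \<theta> xo yo (fst p) (snd p) - t_o = (\<Sum>k\<in>UNIV. cmp k p * X1_star s \<theta> xo yo $ k)"
  using assms by (simp add: sum_3 t_star_def X1_star_def field_simps)

lemma cont_pick1: "(\<lambda>z :: real \<times> real \<times> real. (fst z, fst (snd z))) \<in> borel_measurable borel"
  by (rule borel_measurable_continuous_onI) (intro continuous_intros)

lemma cont_pick2: "(\<lambda>z :: real \<times> real \<times> real. snd (snd z)) \<in> borel_measurable borel"
  by (rule borel_measurable_continuous_onI) (intro continuous_intros)

lemma pair_meas_borel:
  fixes h :: "real \<times> real \<Rightarrow> real"
  assumes "h \<in> borel_measurable borel"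
  shows "(\<lambda>z :: real \<times> real \<times> real. h (fst z, fst (snd z))) \<in> borel_measurable borel"
  using measurable_compose[OF cont_pick1 assms] by (simp add: comp_def)

context setting begin

interpretation P: prob_space M by (rule prob)

lemma D_transfer:
  fixes g :: "real \<times> real \<Rightarrow> real"
  assumes [measurable]: "g \<in> borel_measurable borel"
  shows "integral\<^sup>L D g = (\<integral>\<omega>. g (xs 0 \<omega>, ys 0 \<omega>) \<partial>M)"
    and "integrable D g \<longleftrightarrow> integrable M (\<lambda>\<omega>. g (xs 0 \<omega>, ys 0 \<omega>))"
  unfolding D_def by (simp_all add: integral_distr integrable_distr_eq)

lemma D_int_sq: "integrable D (\<lambda>p. (fst p)^2 + (snd p)^2 + 1)"
proof -
  interpret D: prob_space D by (rule prob_D)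
  have "integrable D (\<lambda>p. (fst p)^2)" using int_x2 by (subst D_transfer) auto
  moreover have "integrable D (\<lambda>p. (snd p)^2)" using int_y2 by (subst D_transfer) auto
  ultimately show ?thesis by auto
qed

lemma D_int_cc: "integrable D (\<lambda>p. cmp i p * cmp k p)"
proof (rule Bochner_Integration.integrable_bound[OF D_int_sq])
  show "(\<lambda>p. cmp i p * cmp k p) \<in> borel_measurable D" by (simp add: D_def)
  show "AE p in D. norm (cmp i p * cmp k p) \<le> norm ((fst p)^2 + (snd p)^2 + 1)"
    using comp_prod_bound[of i _ k] by (auto intro: order_trans[OF _ abs_ge_self])
qed

definition "Gm = (\<chi> i k. \<integral>p. cmp i p * cmp k p \<partial>D)"
definition "bm = (\<chi> i. \<integral>p. cmp i p * (t_star t_o s \<theta> xo yo (fst p) (snd p) - t_o) \<partial>D)"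

lemma D_int_ct: "integrable D (\<lambda>p. cmp i p * (t_star t_o s \<theta> xo yo (fst p) (snd p) - t_o))"
proof -
  have "integrable D (\<lambda>p. \<Sum>k\<in>UNIV. X1_star s \<theta> xo yo $ k * (cmp i p * cmp k p))"
    using D_int_cc by auto
  then show ?thesis using s_pos by (simp add: ts_lin sum_distrib_left mult_ac)
qed

lemma bm_eq: "bm = Gm *v X1_star s \<theta> xo yo"
proof -
  have "bm $ i = (Gm *v X1_star s \<theta> xo yo) $ i" for i
  proof -
    have "bm $ i = (\<integral>p. (\<Sum>k\<in>UNIV. X1_star s \<theta> xo yo $ k * (cmp i p * cmp k p)) \<partial>D)"
      unfolding bm_def using s_pos by (simp add: ts_lin sum_distrib_left mult_ac)
    also have "\<dots> = (\<Sum>k\<in>UNIV. X1_star s \<theta> xo yo $ k * (\<integral>p. cmp i p * cmp k p \<partial>D))"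
      using D_int_cc by (simp add: Bochner_Integration.integral_sum)
    also have "\<dots> = (Gm *v X1_star s \<theta> xo yo) $ i"
      by (simp add: Gm_def matrix_vector_mult_def mult_ac)
    finally show ?thesis .
  qed
  then show ?thesis by (simp add: vec_eq_iff)
qed

lemma Gm_det: "det Gm \<noteq> 0"
proof -
  interpret D: prob_space D by (rule prob_D)
  have ex: "(\<integral>p. fst p \<partial>D) = 0" using mean_x by (subst D_transfer) auto
  have ey: "(\<integral>p. snd p \<partial>D) = 0" using mean_y by (subst D_transfer) auto
  have cxx: "covar M (xs 0) (xs 0) = (\<integral>p. fst p * fst p \<partial>D)"
    unfolding covar_def mean_x by (subst D_transfer) auto
  have cyy: "covar M (ys 0) (ys 0) = (\<integral>p. snd p * snd p \<partial>D)"
    unfolding covar_def mean_y by (subst D_transfer) auto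
  have cxy: "covar M (xs 0) (ys 0) = (\<integral>p. fst p * snd p \<partial>D)"
    unfolding covar_def mean_x mean_y by (subst D_transfer) auto
  have cyx: "covar M (ys 0) (xs 0) = (\<integral>p. snd p * fst p \<partial>D)"
    unfolding covar_def mean_x mean_y by (subst D_transfer) auto
  have "det Gm = covar M (xs 0) (xs 0) * covar M (ys 0) (ys 0) - covar M (xs 0) (ys 0) * covar M (ys 0) (xs 0)"
    unfolding det_3 Gm_def cxx cyy cxy cyx by (simp add: ex ey D.prob_space)
  also have "\<dots> \<noteq> 0" using nonsing by (simp add: det_2)
  finally show ?thesis .
qed

lemma Gm_lower: obtains c where "c > 0" "\<And>u. c * norm u \<le> norm (Gm *v u)"
proof -
  have inv: "invertible Gm" using Gm_det invertible_det_nz by blast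
  then obtain G' where G': "G' ** Gm = mat 1" using invertible_left_inverse by blast
  define S where "S = (\<Sum>i\<in>UNIV. \<Sum>k\<in>UNIV. \<bar>G'$i$k\<bar>)"
  have S0: "0 \<le> S" unfolding S_def by (intro sum_nonneg) auto
  have "1 / (S + 1) * norm u \<le> norm (Gm *v u)" for u
  proof -
    have "norm u = norm (G' *v (Gm *v u))" by (simp add: matrix_vector_mul_assoc G')
    also have "\<dots> \<le> S * norm (Gm *v u)" unfolding S_def by (rule mvbound)
    also have "\<dots> \<le> (S + 1) * norm (Gm *v u)" by (simp add: mult_right_mono)
    finally show ?thesis using S0 by (simp add: field_simps)
  qed
  moreover have "1 / (S + 1) > 0" using S0 by simp
  ultimately show ?thesis using that by blast
qed

end


lemma cmp_fst_meas[measurable]: "(\<lambda>q :: (real \<times> real) \<times> real. cmp i (fst q) * snd q) \<in> borel_measurable borel"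
proof -
  have "cmp i = fst \<or> cmp i = snd \<or> cmp i = (\<lambda>_. 1)"
    using exhaust_3[of i] by (auto simp: fun_eq_iff)
  then have "continuous_on UNIV (\<lambda>q :: (real \<times> real) \<times> real. cmp i (fst q) * snd q)"
    by (auto intro!: continuous_intros)
  then show ?thesis by (rule borel_measurable_continuous_onI)
qed

context setting begin

interpretation P: prob_space M by (rule prob)

lemma indep_Z:
  fixes f :: "real \<times> real \<times> real \<Rightarrow> real"
  assumes "f \<in> borel_measurable borel"
  shows "P.indep_vars (\<lambda>_. borel) (\<lambda>j \<omega>. f (xs j \<omega>, ys j \<omega>, T j \<omega>)) UNIV"
  using P.indep_vars_compose2[OF indep, of "\<lambda>_. f" "\<lambda>_. borel"] assms by simp

lemma conv_H:
  assumes \<rho>: "\<rho> > 0"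
  shows "(\<lambda>n. P.prob {\<omega>\<in>space M. \<rho> < \<bar>(\<Sum>j<n. cmp i (xs j \<omega>, ys j \<omega>) * cmp k (xs j \<omega>, ys j \<omega>)) / real n - Gm$i$k\<bar>}) \<longlonglongrightarrow> 0"
proof -
  define g where "g p = cmp i p * cmp k p" for p
  have gm[measurable]: "g \<in> borel_measurable borel" unfolding g_def by measurable
  let ?Z = "\<lambda>j \<omega>. g (xs j \<omega>, ys j \<omega>)"
  have ind: "P.indep_vars (\<lambda>_. borel) ?Z UNIV"
    using indep_Z[OF pair_meas_borel[OF gm]] by simp
  have dist: "distr M borel (?Z j) = distr D borel g" for j
  proof -
    have "distr M borel (?Z j) = distr (distr M borel (\<lambda>\<omega>. (xs j \<omega>, ys j \<omega>))) borel g"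
      by (subst distr_distr) (auto simp: comp_def)
    then show ?thesis by (simp add: ident[of j] D_def)
  qed
  have ident': "\<And>j. distr M borel (?Z j) = distr M borel (?Z 0)" using dist by simp
  have int0: "integrable M (?Z 0)"
    using D_int_cc[of i k] D_transfer(2)[OF gm] by (simp add: g_def[abs_def])
  have E0: "P.expectation (?Z 0) = Gm$i$k"
    unfolding Gm_def using D_transfer(1)[OF gm] by (simp add: g_def[abs_def])
  show ?thesis using P.wlln[OF ind ident' int0 \<rho>] unfolding E0 by (simp add: g_def)
qed

lemma conv_b:
  assumes \<rho>: "\<rho> > 0"
  shows "(\<lambda>n. P.prob {\<omega>\<in>space M. \<rho> < \<bar>(\<Sum>j<n. cmp i (xs j \<omega>, ys j \<omega>) * (T j \<omega> - t_o)) / real n - bm$i\<bar>}) \<longlonglongrightarrow> 0"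
proof -
  define g where "g q = cmp i (fst q) * snd q" for q :: "(real \<times> real) \<times> real"
  have gm[measurable]: "g \<in> borel_measurable borel" unfolding g_def by measurable
  let ?Z = "\<lambda>j \<omega>. cmp i (xs j \<omega>, ys j \<omega>) * (T j \<omega> - t_o)"
  have fm: "(\<lambda>z :: real \<times> real \<times> real. cmp i (fst z, fst (snd z)) * (snd (snd z) - t_o)) \<in> borel_measurable borel"
    using pair_meas_borel[OF comp_meas[of i]] cont_pick2 by measurable
  have ind: "P.indep_vars (\<lambda>_. borel) ?Z UNIV"
    using indep_Z[OF fm] by simp
  have dist: "distr M borel (?Z j) = distr KK borel g" for j
  proof -
    have "distr M borel (?Z j) = distr (distr M borel (\<lambda>\<omega>. ((xs j \<omega>, ys j \<omega>), T j \<omega> - t_o))) borel g"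
      by (subst distr_distr) (auto simp: comp_def g_def)
    then show ?thesis by (simp add: joint[of j])
  qed
  have ident': "\<And>j. distr M borel (?Z j) = distr M borel (?Z 0)" using dist by simp
  have intK: "integrable KK g" unfolding g_def by (rule mom(1)[OF comp_meas D_int_ct])
  have int0: "integrable M (?Z 0)"
  proof -
    have "integrable (distr M borel (\<lambda>\<omega>. ((xs 0 \<omega>, ys 0 \<omega>), T 0 \<omega> - t_o))) g"
      using intK by (simp add: joint[of 0])
    then show ?thesis by (subst (asm) integrable_distr_eq) (auto simp: g_def)
  qed
  have E0: "P.expectation (?Z 0) = bm$i"
  proof -
    have "P.expectation (?Z 0) = integral\<^sup>L (distr M borel (\<lambda>\<omega>. ((xs 0 \<omega>, ys 0 \<omega>), T 0 \<omega> - t_o))) g"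
      by (subst integral_distr) (auto simp: g_def)
    also have "\<dots> = integral\<^sup>L KK g" by (simp add: joint[of 0])
    also have "\<dots> = bm$i" unfolding g_def bm_def using mom(2)[OF comp_meas D_int_ct] by simp
    finally show ?thesis .
  qed
  show ?thesis using P.wlln[OF ind ident' int0 \<rho>] unfolding E0 .
qed

end


context setting begin

interpretation P: prob_space M by (rule prob)

lemma main:
  "tendsto_in_prob M (\<lambda>n \<omega>. X1_star s \<theta> xo yo - LS_X1 (\<lambda>j. xs j \<omega>) (\<lambda>j. ys j \<omega>) (\<lambda>j. T j \<omega> - t_o) n) 0"
proof -
  obtain c where c: "c > 0" "\<And>u. c * norm u \<le> norm (Gm *v u)" using Gm_lower by blast
  let ?X = "X1_star s \<theta> xo yo"
  let ?H = "\<lambda>n \<omega>. A1TA1 (\<lambda>j. xs j \<omega>) (\<lambda>j. ys j \<omega>) n"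
  let ?b = "\<lambda>n \<omega>. A1TY1 (\<lambda>j. xs j \<omega>) (\<lambda>j. ys j \<omega>) (\<lambda>j. T j \<omega> - t_o) n"
  show ?thesis unfolding tendsto_in_prob_def
  proof (intro allI impI)
    fix \<epsilon> :: real assume \<epsilon>: "\<epsilon> > 0"
    define nX where "nX = norm ?X"
    have nX0: "0 \<le> nX" by (simp add: nX_def)
    define \<rho> where "\<rho> = min (c/18) (\<epsilon> * c / (4 * (3 + 9 * nX)))"
    have \<rho>: "\<rho> > 0" using c \<epsilon> nX0 by (simp add: \<rho>_def)
    have \<rho>1: "9 * \<rho> \<le> c/2" by (simp add: \<rho>_def)
    have \<rho>2: "\<rho> * (3 + 9 * nX) \<le> \<epsilon> * c / 4"
    proof -
      have "\<rho> \<le> \<epsilon> * c / (4 * (3 + 9 * nX))" by (simp add: \<rho>_def)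
      then show ?thesis using nX0 by (simp add: pos_le_divide_eq mult_ac)
    qed
    define AH where "AH n q = {\<omega>\<in>space M. \<rho> < \<bar>(\<Sum>j<n. cmp (fst q) (xs j \<omega>, ys j \<omega>) * cmp (snd q) (xs j \<omega>, ys j \<omega>)) / real n - Gm$(fst q)$(snd q)\<bar>}" for n and q :: "3 \<times> 3"
    define AB where "AB n i = {\<omega>\<in>space M. \<rho> < \<bar>(\<Sum>j<n. cmp i (xs j \<omega>, ys j \<omega>) * (T j \<omega> - t_o)) / real n - bm$i\<bar>}" for n i
    have AHs[measurable]: "AH n q \<in> sets M" for n q unfolding AH_def by measurable
    have ABs[measurable]: "AB n i \<in> sets M" for n i unfolding AB_def by measurable
    have lim: "(\<lambda>n. (\<Sum>q\<in>UNIV. P.prob (AH n q)) + (\<Sum>i\<in>UNIV. P.prob (AB n i))) \<longlonglongrightarrow> 0"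
      unfolding AH_def AB_def
      by (intro tendsto_add_zero tendsto_null_sum conv_H conv_b \<rho>)
    have Hent: "?H n \<omega> $ i $ k = (\<Sum>j<n. cmp i (xs j \<omega>, ys j \<omega>) * cmp k (xs j \<omega>, ys j \<omega>))" for n \<omega> i k
      by (simp add: A1TA1_def row_comp)
    have bent: "?b n \<omega> $ i = (\<Sum>j<n. cmp i (xs j \<omega>, ys j \<omega>) * (T j \<omega> - t_o))" for n \<omega> i
      by (simp add: A1TY1_def row_comp)
    have sub: "{\<omega>\<in>space M. \<epsilon> < norm (?X - LS_X1 (\<lambda>j. xs j \<omega>) (\<lambda>j. ys j \<omega>) (\<lambda>j. T j \<omega> - t_o) n - 0)}
       \<subseteq> (\<Union>q\<in>UNIV. AH n q) \<union> (\<Union>i\<in>UNIV. AB n i)" if n: "1 \<le> n" for n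
    proof
      fix \<omega> assume \<omega>: "\<omega> \<in> {\<omega>\<in>space M. \<epsilon> < norm (?X - LS_X1 (\<lambda>j. xs j \<omega>) (\<lambda>j. ys j \<omega>) (\<lambda>j. T j \<omega> - t_o) n - 0)}"
      show "\<omega> \<in> (\<Union>q\<in>UNIV. AH n q) \<union> (\<Union>i\<in>UNIV. AB n i)"
      proof (rule ccontr)
        assume nin: "\<omega> \<notin> (\<Union>q\<in>UNIV. AH n q) \<union> (\<Union>i\<in>UNIV. AB n i)"
        have h1: "\<bar>?H n \<omega> $ i $ k / real n - Gm$i$k\<bar> \<le> \<rho>" for i k
        proof -
          have "\<omega> \<notin> AH n (i, k)" using nin by blast
          then show ?thesis using \<omega> unfolding Hent by (simp add: AH_def not_less)
        qed
        have h2: "\<bar>?b n \<omega> $ i / real n - bm$i\<bar> \<le> \<rho>" for i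
        proof -
          have "\<omega> \<notin> AB n i" using nin by blast
          then show ?thesis using \<omega> unfolding bent by (simp add: AB_def not_less)
        qed
        have r: "real n > 0" using n by simp
        have e: "(\<Sum>i\<in>UNIV. \<Sum>k\<in>UNIV. \<bar>?H n \<omega> $ i $ k / real n - Gm$i$k\<bar>) \<le> 9 * \<rho>"
        proof -
          have "(\<Sum>i\<in>UNIV. \<Sum>k\<in>UNIV. \<bar>?H n \<omega> $ i $ k / real n - Gm$i$k\<bar>) \<le> (\<Sum>i\<in>(UNIV::3 set). \<Sum>k\<in>(UNIV::3 set). \<rho>)"
            by (intro sum_mono h1)
          then show ?thesis by simp
        qed
        have bb: "norm ((1 / real n) *\<^sub>R ?b n \<omega> - Gm *v ?X) \<le> 3 * \<rho>"
        proof -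
          have "norm ((1 / real n) *\<^sub>R ?b n \<omega> - Gm *v ?X) \<le> (\<Sum>i\<in>UNIV. \<bar>((1 / real n) *\<^sub>R ?b n \<omega> - Gm *v ?X) $ i\<bar>)"
            by (rule norm_le_l1_cart)
          also have "\<dots> \<le> (\<Sum>i\<in>(UNIV::3 set). \<rho>)"
          proof (rule sum_mono)
            fix i
            show "\<bar>((1 / real n) *\<^sub>R ?b n \<omega> - Gm *v ?X) $ i\<bar> \<le> \<rho>"
              using h2[of i] unfolding bm_eq[symmetric] by simp
          qed
          finally show ?thesis by simp
        qed
        note DL = det_lemma[OF c(1) c(2) r e \<rho>1 bb]
        have "norm (matrix_inv (?H n \<omega>) *v ?b n \<omega> - ?X) \<le> 2/c * (3 * \<rho> + 9 * \<rho> * nX)"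
          using DL(2) unfolding nX_def .
        also have "\<dots> = 2/c * (\<rho> * (3 + 9 * nX))" by (simp add: algebra_simps)
        also have "\<dots> \<le> 2/c * (\<epsilon> * c / 4)" using \<rho>2 c(1) by (intro mult_left_mono) auto
        also have "\<dots> = \<epsilon> / 2" using c(1) by simp
        finally have "norm (matrix_inv (?H n \<omega>) *v ?b n \<omega> - ?X) \<le> \<epsilon> / 2" .
        moreover have "norm (?X - LS_X1 (\<lambda>j. xs j \<omega>) (\<lambda>j. ys j \<omega>) (\<lambda>j. T j \<omega> - t_o) n - 0)
            = norm (matrix_inv (?H n \<omega>) *v ?b n \<omega> - ?X)"
          by (simp add: LS_X1_def norm_minus_commute)
        ultimately show False using \<omega> \<epsilon> by simp
      qed
    qed
    show "(\<lambda>n. measure M {\<omega>\<in>space M. \<epsilon> < norm (?X - LS_X1 (\<lambda>j. xs j \<omega>) (\<lambda>j. ys j \<omega>) (\<lambda>j. T j \<omega> - t_o) n - 0)}) \<longlonglongrightarrow> 0"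
    proof (rule tendsto_sandwich[OF _ _ tendsto_const lim])
      show "\<forall>\<^sub>F n in sequentially. 0 \<le> measure M {\<omega>\<in>space M. \<epsilon> < norm (?X - LS_X1 (\<lambda>j. xs j \<omega>) (\<lambda>j. ys j \<omega>) (\<lambda>j. T j \<omega> - t_o) n - 0)}"
        by simp
      show "\<forall>\<^sub>F n in sequentially. measure M {\<omega>\<in>space M. \<epsilon> < norm (?X - LS_X1 (\<lambda>j. xs j \<omega>) (\<lambda>j. ys j \<omega>) (\<lambda>j. T j \<omega> - t_o) n - 0)}
          \<le> (\<Sum>q\<in>UNIV. P.prob (AH n q)) + (\<Sum>i\<in>UNIV. P.prob (AB n i))"
        using eventually_ge_at_top[of 1]
      proof eventually_elim
        case (elim n)
        have "measure M {\<omega>\<in>space M. \<epsilon> < norm (?X - LS_X1 (\<lambda>j. xs j \<omega>) (\<lambda>j. ys j \<omega>) (\<lambda>j. T j \<omega> - t_o) n - 0)}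
            \<le> measure M ((\<Union>q\<in>UNIV. AH n q) \<union> (\<Union>i\<in>UNIV. AB n i))"
          by (rule measure_le_sets[OF P.finite_measure_axioms _ sub[OF elim]]) auto
        also have "\<dots> \<le> measure M (\<Union>q\<in>UNIV. AH n q) + measure M (\<Union>i\<in>UNIV. AB n i)"
          by (rule measure_Un_le) auto
        also have "\<dots> \<le> (\<Sum>q\<in>UNIV. P.prob (AH n q)) + (\<Sum>i\<in>UNIV. P.prob (AB n i))"
          by (intro add_mono measure_UNION_le) auto
        finally show ?case .
      qed
    qed
  qed
qed

end

theorem lemma1:
  fixes M :: "'a measure"
    and xs ys T :: "nat \<Rightarrow> 'a \<Rightarrow> real"
    and t_o s \<theta> xo yo :: real
    and lam :: nat
  assumes prob: "prob_space M"
    and s_pos: "s > 0"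
    and lam_pos: "lam \<ge> 1"
    and meas_x: "\<And>j. xs j \<in> borel_measurable M"
    and meas_y: "\<And>j. ys j \<in> borel_measurable M"
    and meas_T: "\<And>j. T j \<in> borel_measurable M"
    and indep: "prob_space.indep_vars M (\<lambda>_. borel) (\<lambda>j \<omega>. (xs j \<omega>, ys j \<omega>, T j \<omega>)) UNIV"
    and ident: "\<And>j. distr M borel (\<lambda>\<omega>. (xs j \<omega>, ys j \<omega>)) = distr M borel (\<lambda>\<omega>. (xs 0 \<omega>, ys 0 \<omega>))"
    and int_x2: "integrable M (\<lambda>\<omega>. (xs 0 \<omega>)\<^sup>2)"
    and int_y2: "integrable M (\<lambda>\<omega>. (ys 0 \<omega>)\<^sup>2)"
    and mean_x: "(\<integral>\<omega>. xs 0 \<omega> \<partial>M) = 0"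
    and mean_y: "(\<integral>\<omega>. ys 0 \<omega> \<partial>M) = 0"
    and nonsing: "det (vector [vector [covar M (xs 0) (xs 0), covar M (xs 0) (ys 0)],
                               vector [covar M (ys 0) (xs 0), covar M (ys 0) (ys 0)]] :: real^2^2) \<noteq> 0"
    and after: "\<And>j. AE \<omega> in M. t_star t_o s \<theta> xo yo (xs j \<omega>) (ys j \<omega>) > t_o"
    and cond_law: "\<And>j A B. A \<in> sets (borel :: (real \<times> real) measure) \<Longrightarrow> B \<in> sets (borel :: real measure) \<Longrightarrow>
        emeasure M {\<omega> \<in> space M. (xs j \<omega>, ys j \<omega>) \<in> A \<and> T j \<omega> - t_o \<in> B}
        = (\<integral>\<^sup>+ p. indicator A p *
              emeasure (density lborel (erlang_density (2 * lam - 1)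
                 (2 * real lam / (t_star t_o s \<theta> xo yo (fst p) (snd p) - t_o)))) B
            \<partial>(distr M borel (\<lambda>\<omega>. (xs j \<omega>, ys j \<omega>))))"
  shows "tendsto_in_prob M
           (\<lambda>n \<omega>. X1_star s \<theta> xo yo - LS_X1 (\<lambda>j. xs j \<omega>) (\<lambda>j. ys j \<omega>) (\<lambda>j. T j \<omega> - t_o) n) 0"
proof -
  interpret S: setting M xs ys T t_o s \<theta> xo yo lam
    by (rule setting.intro[OF prob s_pos lam_pos meas_x meas_y meas_T indep ident int_x2 int_y2
          mean_x mean_y nonsing after cond_law])
  show ?thesis by (rule S.main)
qed

end
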